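(* Let $T_1,\dots,T_N$ be $1$-currents in $\mathbb{R}^2$ given by oriented graphs of smooth functions $f_i:[0,1]\to\mathbb{R}$, all sharing the same two boundary points, and let $\lambda>0$ be small enough as in the standing assumption below. Then the infimum of the median objective $\sum_{i=1}^N\mathbb{F}_\lambda(T_i-T)$ over piecewise smooth $1$-currents $T$ (pieces of boundaries of sets, with the same boundary as the $T_i$) that are not graphs is not smaller than its infimum over $T$ that are oriented graphs of functions on $[0,1]$ with the same boundary. Hence the infimum in the median problem can be restricted to graphs.
   Context: The oriented graph of $f$ is the $1$-current given by integration over $\{(x,f(x)):x\in[0,1]\}$ with unit orienting vector field $(-1,-f'(x))/\sqrt{1+f'(x)^2}$. The multiscale flat norm of a $1$-current $H$ is $\mathbb{F}_\lambda(H)=\inf_S\operatorname{M}(H-\partial S)+\lambda\operatorname{M}(S)$ over $2$-currents $S$, with $\operatorname{M}$ the mass. Standing assumption: $\lambda$ is small enough that for each competitor $T$, $\mathbb{F}_\lambda(T_i-T)=\lambda\operatorname{M}(S_i)$ where $S_i$ is the bounded $2$-current with $\partial S_i=T_i-T$. *)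

theory Defs
  imports "HOL-Complex_Analysis.Complex_Analysis"
begin

definition smooth_on_unit :: "(real \<Rightarrow> real) \<Rightarrow> bool" where
  "smooth_on_unit f \<longleftrightarrow> (\<exists>D :: nat \<Rightarrow> real \<Rightarrow> real.
      (\<forall>x\<in>{0..1}. D 0 x = f x) \<and>
      (\<forall>k. \<forall>x\<in>{0..1}. (D k has_real_derivative D (Suc k) x) (at x within {0..1})))"

text \<open>Parametrisation of the oriented graph of g (points of the plane are complex numbers
  x + iy). The orienting vector is (-1,-g'), so the graph runs from (1,g 1) to (0,g 0).\<close>
definition ograph :: "(real \<Rightarrow> real) \<Rightarrow> real \<Rightarrow> complex" where
  "ograph g = (\<lambda>t. Complex (1 - t) (g (1 - t)))"

text \<open>Mass of the bounded 2-current S with boundary the closed piecewise smooth curve c: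
  the integral of |multiplicity| = |winding number of c|.\<close>
definition mass2 :: "(real \<Rightarrow> complex) \<Rightarrow> ennreal" where
  "mass2 c = (\<integral>\<^sup>+ z. (if z \<in> path_image c then 0 else ennreal (cmod (winding_number c z))) \<partial>lborel)"

text \<open>Median objective sum_i F_lambda(T_i - T), where by the standing assumption
  F_lambda(T_i - T) = lambda * M(S_i), dS_i = T_i - T.\<close>
definition median_obj :: "real \<Rightarrow> (nat \<Rightarrow> real \<Rightarrow> real) \<Rightarrow> nat \<Rightarrow> (real \<Rightarrow> complex) \<Rightarrow> ennreal" where
  "median_obj lam f N \<gamma> = (\<Sum>i<N. ennreal lam * mass2 (ograph (f i) +++ reversepath \<gamma>))"

definition competitor :: "(nat \<Rightarrow> real \<Rightarrow> real) \<Rightarrow> (real \<Rightarrow> complex) \<Rightarrow> bool" where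
  "competitor f \<gamma> \<longleftrightarrow> valid_path \<gamma> \<and> pathstart \<gamma> = Complex 1 (f 0 1)
      \<and> pathfinish \<gamma> = Complex 0 (f 0 0)"

definition is_graph_param :: "(real \<Rightarrow> complex) \<Rightarrow> bool" where
  "is_graph_param \<gamma> \<longleftrightarrow> (\<exists>g. \<forall>t\<in>{0..1}. \<gamma> t = ograph g t)"

end

theory Submission
  imports Defs
begin


lemma ograph_start[simp]: "pathstart (ograph h) = Complex 1 (h 1)"
  by (simp add: ograph_def pathstart_def)
lemma ograph_finish[simp]: "pathfinish (ograph h) = Complex 0 (h 0)"
  by (simp add: ograph_def pathfinish_def)

lemma path_image_ograph: "path_image (ograph h) = (\<lambda>x. Complex x (h x)) ` {0..1}"
  unfolding path_image_def ograph_def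
proof (rule set_eqI, rule iffI)
  fix w assume "w \<in> (\<lambda>t. Complex (1 - t) (h (1 - t))) ` {0..1}"
  then obtain t where "t \<in> {0..1}" "w = Complex (1 - t) (h (1 - t))" by auto
  then show "w \<in> (\<lambda>x. Complex x (h x)) ` {0..1}" by (intro image_eqI[where x="1-t"]) auto
next
  fix w assume "w \<in> (\<lambda>x. Complex x (h x)) ` {0..1}"
  then obtain x where "x \<in> {0..1}" "w = Complex x (h x)" by auto
  then show "w \<in> (\<lambda>t. Complex (1 - t) (h (1 - t))) ` {0..1}" by (intro image_eqI[where x="1-x"]) auto
qed

lemma path_ograph:
  assumes "continuous_on {0..1} h" shows "path (ograph h)"
proof -
  have "continuous_on {0..1} (\<lambda>t::real. h (1 - t))"
    by (rule continuous_on_compose2[OF assms]) (auto intro!: continuous_intros)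
  then have "continuous_on {0..1} (\<lambda>t::real. Complex (1 - t) (h (1 - t)))"
    by (simp add: Complex_eq continuous_intros)
  then show ?thesis by (simp add: path_def ograph_def)
qed

lemma closed_segment_vertical:
  assumes "w \<in> closed_segment a b" "Re a = x" "Re b = x"
  shows "Re w = x \<and> min (Im a) (Im b) \<le> Im w \<and> Im w \<le> max (Im a) (Im b)"
proof -
  obtain u where u: "0 \<le> u" "u \<le> 1" "w = (1 - u) *\<^sub>R a + u *\<^sub>R b"
    using assms(1) by (auto simp: closed_segment_def)
  have "Re w = (1-u) * x + u * x" using u assms by simp
  moreover have "Im w = (1-u) * Im a + u * Im b" using u by simp
  moreover have "min (Im a) (Im b) \<le> (1-u) * Im a + u * Im b"
  proof -
    have "(1-u) * min (Im a) (Im b) + u * min (Im a) (Im b) \<le> (1-u) * Im a + u * Im b"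
      using u by (intro add_mono mult_left_mono) auto
    then show ?thesis by (simp add: algebra_simps)
  qed
  moreover have "(1-u) * Im a + u * Im b \<le> max (Im a) (Im b)"
  proof -
    have "(1-u) * Im a + u * Im b \<le> (1-u) * max (Im a) (Im b) + u * max (Im a) (Im b)"
      using u by (intro add_mono mult_left_mono) auto
    then show ?thesis by (simp add: algebra_simps)
  qed
  ultimately show ?thesis by (simp add: algebra_simps)
qed

lemma wn_vertical_homotopy:
  assumes "path g" "path h" "pathstart g = pathstart h" "pathfinish g = pathfinish h"
    and "\<And>t. t \<in> {0..1} \<Longrightarrow> Re (g t) = 1 - t" "\<And>t. t \<in> {0..1} \<Longrightarrow> Re (h t) = 1 - t"
    and "\<And>t. t \<in> {0..1} \<Longrightarrow> Re z = 1 - t \<Longrightarrow>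
           (Im z < Im (g t) \<and> Im z < Im (h t)) \<or> (Im z > Im (g t) \<and> Im z > Im (h t))"
  shows "winding_number g z = winding_number h z"
proof (rule winding_number_homotopic_paths, rule homotopic_paths_linear)
  fix t :: real assume t: "t \<in> {0..1}"
  show "closed_segment (g t) (h t) \<subseteq> - {z}"
  proof
    fix w assume w: "w \<in> closed_segment (g t) (h t)"
    from closed_segment_vertical[OF w assms(5)[OF t] assms(6)[OF t]]
    have "Re w = 1 - t" "min (Im (g t)) (Im (h t)) \<le> Im w" "Im w \<le> max (Im (g t)) (Im (h t))" by auto
    then show "w \<in> - {z}" using assms(7)[OF t] by (auto simp: complex_eq_iff)
  qed
qed (use assms in auto)



lemma not_in_seg_of_Im_pos:
  assumes "0 < Im ((b - a) * cnj (b - z))"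
  shows "z \<notin> closed_segment a b"
  using assms by (simp add: closed_segment_def) (force simp: algebra_simps)

lemma tri_wn:
  assumes h1: "0 < Im ((b - a) * cnj (b - z))" and h2: "0 < Im ((c - b) * cnj (c - z))"
      and h3: "0 < Im ((a - c) * cnj (a - z))"
  shows "winding_number (linepath a b) z + winding_number (linepath b c) z
          + winding_number (linepath c a) z = 1"
proof -
  have znot: "z \<notin> closed_segment a b" "z \<notin> closed_segment b c" "z \<notin> closed_segment c a"
    using not_in_seg_of_Im_pos h1 h2 h3 by auto
  let ?W = "linepath a b +++ linepath b c +++ linepath c a"
  have eq: "winding_number ?W z = winding_number (linepath a b) z + winding_number (linepath b c) z
          + winding_number (linepath c a) z"
    using znot by (simp add: winding_number_join path_image_join)
  have gt0: "0 < Re (winding_number ?W z)"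
    using winding_number_linepath_pos_lt[OF h1] winding_number_linepath_pos_lt[OF h2]
      winding_number_linepath_pos_lt[OF h3] unfolding eq by simp
  have lt2: "Re (winding_number ?W z) < 2"
    using winding_number_lt_half_linepath [of _ a b]
    using winding_number_lt_half_linepath [of _ b c]
    using winding_number_lt_half_linepath [of _ c a] znot
    by (fastforce simp add: winding_number_join path_image_join)
  have "winding_number ?W z = 1"
    by (rule winding_number_eq_1) (use znot in \<open>simp_all add: path_image_join gt0 lt2\<close>)
  then show ?thesis using eq by simp
qed

definition Jp :: "real \<Rightarrow> real \<Rightarrow> real \<Rightarrow> real \<Rightarrow> complex" where
  "Jp A B Y = linepath (Complex 1 B) (Complex (1/2) Y) +++ linepath (Complex (1/2) Y) (Complex 0 A)"

definition Uf :: "real \<Rightarrow> real \<Rightarrow> real \<Rightarrow> real \<Rightarrow> real" where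
  "Uf A B Y x = (if x \<le> 1/2 then A + 2*x*(Y-A) else Y + (2*x-1)*(B-Y))"

lemma Jp_eq: "Jp A B Y t = Complex (1 - t) (Uf A B Y (1 - t))"
  by (auto simp: Jp_def Uf_def joinpaths_def linepath_def complex_eq_iff algebra_simps)

lemma Jp_path: "path (Jp A B Y)"
  by (simp add: Jp_def)
lemma Jp_start: "pathstart (Jp A B Y) = Complex 1 B"
  by (simp add: Jp_def)
lemma Jp_finish: "pathfinish (Jp A B Y) = Complex 0 A"
  by (simp add: Jp_def)

lemma lba_eq: "linepath (Complex 1 B) (Complex 0 A) t = Complex (1 - t) (A + (B - A) * (1 - t))"
  by (simp add: linepath_def complex_eq_iff algebra_simps)

lemma lin_aux1: "(u::real) = A + 2*k \<Longrightarrow> (y0-A)/2 < k \<Longrightarrow> y0 < u" by (simp add: field_simps)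
lemma lin_aux2: "(u::real) = A - 2*k \<Longrightarrow> (A-y0)/2 < k \<Longrightarrow> u < y0" by (simp add: field_simps)

lemma Uf_gt:
  assumes "0 < x0" "x0 < 1" "(Y-B)*(1-x0) > (y0-B)/2" "(Y-A)*x0 > (y0-A)/2"
  shows "Uf A B Y x0 > y0"
proof (cases "x0 \<le> 1/2")
  case True
  have "Uf A B Y x0 = A + 2*((Y-A)*x0)" using True by (simp add: Uf_def algebra_simps)
  then show ?thesis using assms(4) by (rule lin_aux1)
next
  case False
  have "Uf A B Y x0 = B + 2*((Y-B)*(1-x0))" using False by (simp add: Uf_def algebra_simps)
  then show ?thesis using assms(3) by (rule lin_aux1)
qed

lemma Uf_lt:
  assumes "0 < x0" "x0 < 1" "(B-Y)*(1-x0) > (B-y0)/2" "(A-Y)*x0 > (A-y0)/2"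
  shows "Uf A B Y x0 < y0"
proof (cases "x0 \<le> 1/2")
  case True
  have "Uf A B Y x0 = A - 2*((A-Y)*x0)" using True by (simp add: Uf_def algebra_simps)
  then show ?thesis using assms(4) by (rule lin_aux2)
next
  case False
  have "Uf A B Y x0 = B - 2*((B-Y)*(1-x0))" using False by (simp add: Uf_def algebra_simps)
  then show ?thesis using assms(3) by (rule lin_aux2)
qed

lemma wn_up:
  assumes "0 < x0" "x0 < 1" "y0 > A + (B-A)*x0"
    "(Y-B)*(1-x0) > (y0-B)/2" "(Y-A)*x0 > (y0-A)/2"
  shows "winding_number (Jp A B Y) (Complex x0 y0)
         - winding_number (linepath (Complex 1 B) (Complex 0 A)) (Complex x0 y0) = 1"
proof -
  let ?a = "Complex 0 A" and ?b = "Complex 1 B" and ?c = "Complex (1/2) Y" and ?z = "Complex x0 y0"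
  have "Im ((?b - ?a) * cnj (?b - ?z)) = y0 - (A + (B-A)*x0)" by (simp add: algebra_simps; simp add: field_simps)
  then have c1: "0 < Im ((?b - ?a) * cnj (?b - ?z))" using assms by linarith
  have "Im ((?c - ?b) * cnj (?c - ?z)) = (Y-B)*(1-x0) - (y0-B)/2" by (simp add: algebra_simps; simp add: field_simps)
  then have c2: "0 < Im ((?c - ?b) * cnj (?c - ?z))" using assms by linarith
  have "Im ((?a - ?c) * cnj (?a - ?z)) = (Y-A)*x0 - (y0-A)/2" by (simp add: algebra_simps; simp add: field_simps)
  then have c3: "0 < Im ((?a - ?c) * cnj (?a - ?z))" using assms by linarith
  have znot: "?z \<notin> closed_segment ?a ?b" "?z \<notin> closed_segment ?b ?c" "?z \<notin> closed_segment ?c ?a"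
    using not_in_seg_of_Im_pos c1 c2 c3 by auto
  have "winding_number (Jp A B Y) ?z = winding_number (linepath ?b ?c) ?z + winding_number (linepath ?c ?a) ?z"
    unfolding Jp_def using znot by (simp add: winding_number_join)
  moreover have "winding_number (linepath ?b ?a) ?z = - winding_number (linepath ?a ?b) ?z"
    using znot winding_number_reversepath[of "linepath ?a ?b" ?z] by (simp add: reversepath_linepath)
  ultimately show ?thesis using tri_wn[OF c1 c2 c3] by (simp add: algebra_simps)
qed

lemma wn_down:
  assumes "0 < x0" "x0 < 1" "y0 < A + (B-A)*x0"
    "(B-Y)*(1-x0) > (B-y0)/2" "(A-Y)*x0 > (A-y0)/2"
  shows "winding_number (linepath (Complex 1 B) (Complex 0 A)) (Complex x0 y0)
         - winding_number (Jp A B Y) (Complex x0 y0) = 1"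
proof -
  let ?a = "Complex 0 A" and ?b = "Complex 1 B" and ?c = "Complex (1/2) Y" and ?z = "Complex x0 y0"
  have "Im ((?c - ?a) * cnj (?c - ?z)) = (A-Y)*x0 - (A-y0)/2" by (simp add: algebra_simps; simp add: field_simps)
  then have c1: "0 < Im ((?c - ?a) * cnj (?c - ?z))" using assms by linarith
  have "Im ((?b - ?c) * cnj (?b - ?z)) = (B-Y)*(1-x0) - (B-y0)/2" by (simp add: algebra_simps; simp add: field_simps)
  then have c2: "0 < Im ((?b - ?c) * cnj (?b - ?z))" using assms by linarith
  have "Im ((?a - ?b) * cnj (?a - ?z)) = (A + (B-A)*x0) - y0" by (simp add: algebra_simps; simp add: field_simps)
  then have c3: "0 < Im ((?a - ?b) * cnj (?a - ?z))" using assms by linarith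
  have znot: "?z \<notin> closed_segment ?a ?c" "?z \<notin> closed_segment ?c ?b" "?z \<notin> closed_segment ?b ?a"
    using not_in_seg_of_Im_pos c1 c2 c3 by auto
  have znot': "?z \<notin> closed_segment ?c ?a" "?z \<notin> closed_segment ?b ?c"
    using znot by (auto simp: closed_segment_commute)
  have e1: "winding_number (Jp A B Y) ?z = winding_number (linepath ?b ?c) ?z + winding_number (linepath ?c ?a) ?z"
    unfolding Jp_def using znot' by (simp add: winding_number_join)
  have e2: "winding_number (linepath ?b ?c) ?z = - winding_number (linepath ?c ?b) ?z"
    using znot winding_number_reversepath[of "linepath ?c ?b" ?z] by (simp add: reversepath_linepath)
  have e3: "winding_number (linepath ?c ?a) ?z = - winding_number (linepath ?a ?c) ?z"
    using znot winding_number_reversepath[of "linepath ?a ?c" ?z] by (simp add: reversepath_linepath)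
  show ?thesis unfolding e1 e2 e3 using tri_wn[OF c1 c2 c3] by (simp add: algebra_simps)
qed



definition gI :: "(real \<Rightarrow> real) \<Rightarrow> complex \<Rightarrow> real" where
  "gI h z = (if 0 \<le> Re z \<and> Re z \<le> 1 \<and> Im z < h (Re z) then 1 else 0)"

lemma exY:
  assumes "0 < uu" "uu < (1::real)"
  shows "\<exists>Y. (Y-B)*(1-uu) > (yy-B)/2 \<and> (Y-A)*uu > (yy-A)/2"
proof -
  define Y where "Y = max (A + (\<bar>yy-A\<bar>+1)/uu) (B + (\<bar>yy-B\<bar>+1)/(1-uu))"
  have "(Y-A)*uu \<ge> ((\<bar>yy-A\<bar>+1)/uu)*uu"
    using assms by (intro mult_right_mono) (auto simp: Y_def)
  then have 1: "(Y-A)*uu \<ge> \<bar>yy-A\<bar>+1" using assms by simp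
  have "(Y-B)*(1-uu) \<ge> ((\<bar>yy-B\<bar>+1)/(1-uu))*(1-uu)"
    using assms by (intro mult_right_mono) (auto simp: Y_def)
  then have 2: "(Y-B)*(1-uu) \<ge> \<bar>yy-B\<bar>+1" using assms by simp
  show ?thesis using 1 2 by (intro exI[of _ Y]) auto
qed

lemma exY':
  assumes "0 < uu" "uu < (1::real)"
  shows "\<exists>Y. (B-Y)*(1-uu) > (B-yy)/2 \<and> (A-Y)*uu > (A-yy)/2"
proof -
  obtain Y where "(Y-(-B))*(1-uu) > ((-yy)-(-B))/2 \<and> (Y-(-A))*uu > ((-yy)-(-A))/2"
    using exY[OF assms] by blast
  then show ?thesis by (intro exI[of _ "-Y"]) (simp add: algebra_simps)
qed

lemma in_image_ograph: "x \<in> {0..1} \<Longrightarrow> Complex x (h x) \<in> path_image (ograph h)"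
  by (auto simp: path_image_ograph)

lemma Re_ograph: "Re (ograph h t) = 1 - t" and Im_ograph: "Im (ograph h t) = h (1 - t)"
  by (auto simp: ograph_def)

lemma wn_between:
  assumes c1: "continuous_on {0..1} h1" and c2: "continuous_on {0..1} h2"
    and e: "h1 0 = A" "h2 0 = A" "h1 1 = B" "h2 1 = B"
    and zs: "z \<notin> closed_segment (Complex 1 B) (Complex 0 A)"
    and x: "0 < Re z" "Re z < 1" and btw: "h2 (Re z) < Im z" "Im z < h1 (Re z)"
  shows "winding_number (ograph h1) z - winding_number (ograph h2) z = 1"
proof -
  define x0 where "x0 = Re z"
  define y0 where "y0 = Im z"
  have z: "z = Complex x0 y0" by (simp add: x0_def y0_def)
  have "Complex x0 (A + (B - A) * x0) = linepath (Complex 1 B) (Complex 0 A) (1 - x0)"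
    by (simp add: lba_eq)
  moreover have "linepath (Complex 1 B) (Complex 0 A) (1 - x0) \<in> closed_segment (Complex 1 B) (Complex 0 A)"
    using x by (auto simp: x0_def intro!: linepath_in_path)
  ultimately have yL: "y0 \<noteq> A + (B - A) * x0" using zs z by auto
  have p1: "path (ograph h1)" and p2: "path (ograph h2)" using c1 c2 by (auto intro: path_ograph)
  have lpath: "path (linepath (Complex 1 B) (Complex 0 A))" by simp
  have Relba: "Re (linepath (Complex 1 B) (Complex 0 A) t) = 1 - t" for t by (simp add: lba_eq)
  have Imlba: "Im (linepath (Complex 1 B) (Complex 0 A) t) = A + (B - A) * (1 - t)" for t by (simp add: lba_eq)
  have ReJ: "Re (Jp A B Y t) = 1 - t" for Y t by (simp add: Jp_eq)
  have ImJ: "Im (Jp A B Y t) = Uf A B Y (1 - t)" for Y t by (simp add: Jp_eq)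
  have t0: "t = 1 - x0" if "Re z = 1 - t" for t using that by (simp add: x0_def)
  show ?thesis
  proof (cases "y0 > A + (B - A) * x0")
    case True
    obtain Y where Y: "(Y-B)*(1-x0) > (y0-B)/2" "(Y-A)*x0 > (y0-A)/2"
      using exY[where uu=x0 and B=B and yy=y0 and A=A] x by (auto simp: x0_def)
    have U: "Uf A B Y x0 > y0" by (rule Uf_gt) (use x Y in \<open>auto simp: x0_def\<close>)
    have w1: "winding_number (ograph h1) z = winding_number (Jp A B Y) z"
      by (rule wn_vertical_homotopy)
        (use p1 Jp_path Jp_start Jp_finish e U btw in \<open>auto simp: Re_ograph Im_ograph ReJ ImJ x0_def y0_def\<close>)
    have w2: "winding_number (ograph h2) z = winding_number (linepath (Complex 1 B) (Complex 0 A)) z"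
      by (rule wn_vertical_homotopy)
        (use p2 lpath e True btw in \<open>auto simp: Re_ograph Im_ograph Relba Imlba x0_def y0_def\<close>)
    have wu: "winding_number (Jp A B Y) (Complex x0 y0)
         - winding_number (linepath (Complex 1 B) (Complex 0 A)) (Complex x0 y0) = 1"
      by (rule wn_up) (use x Y True in \<open>auto simp: x0_def\<close>)
    show ?thesis using w1 w2 wu z by simp
  next
    case False
    then have F: "y0 < A + (B - A) * x0" using yL by auto
    obtain Y where Y: "(B-Y)*(1-x0) > (B-y0)/2" "(A-Y)*x0 > (A-y0)/2"
      using exY'[where uu=x0 and B=B and yy=y0 and A=A] x by (auto simp: x0_def)
    have U: "Uf A B Y x0 < y0" by (rule Uf_lt) (use x Y in \<open>auto simp: x0_def\<close>)
    have w1: "winding_number (ograph h1) z = winding_number (linepath (Complex 1 B) (Complex 0 A)) z"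
      by (rule wn_vertical_homotopy)
        (use p1 lpath e F btw in \<open>auto simp: Re_ograph Im_ograph Relba Imlba x0_def y0_def\<close>)
    have w2: "winding_number (ograph h2) z = winding_number (Jp A B Y) z"
      by (rule wn_vertical_homotopy)
        (use p2 Jp_path Jp_start Jp_finish e U btw in \<open>auto simp: Re_ograph Im_ograph ReJ ImJ x0_def y0_def\<close>)
    have wu: "winding_number (linepath (Complex 1 B) (Complex 0 A)) (Complex x0 y0)
         - winding_number (Jp A B Y) (Complex x0 y0) = 1"
      by (rule wn_down) (use x Y F in \<open>auto simp: x0_def\<close>)
    show ?thesis using w1 w2 wu z by simp
  qed
qed

lemma wn_graph_diff:
  assumes c1: "continuous_on {0..1} h1" and c2: "continuous_on {0..1} h2"
    and e: "h1 0 = A" "h2 0 = A" "h1 1 = B" "h2 1 = B"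
    and z1: "z \<notin> path_image (ograph h1)" and z2: "z \<notin> path_image (ograph h2)"
    and zs: "z \<notin> closed_segment (Complex 1 B) (Complex 0 A)"
  shows "winding_number (ograph h1) z - winding_number (ograph h2) z = complex_of_real (gI h1 z - gI h2 z)"
proof -
  have zeq: "z = Complex (Re z) (Im z)" by simp
  have ne1: "Im z \<noteq> h1 (Re z)" if "0 \<le> Re z" "Re z \<le> 1"
    using z1 in_image_ograph[of "Re z" h1] that zeq by force
  have ne2: "Im z \<noteq> h2 (Re z)" if "0 \<le> Re z" "Re z \<le> 1"
    using z2 in_image_ograph[of "Re z" h2] that zeq by force
  consider (a) "0 \<le> Re z" "Re z \<le> 1" "h2 (Re z) < Im z" "Im z < h1 (Re z)"
    | (b) "0 \<le> Re z" "Re z \<le> 1" "h1 (Re z) < Im z" "Im z < h2 (Re z)"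
    | (c) "\<not> (0 \<le> Re z \<and> Re z \<le> 1 \<and> h2 (Re z) < Im z \<and> Im z < h1 (Re z))"
          "\<not> (0 \<le> Re z \<and> Re z \<le> 1 \<and> h1 (Re z) < Im z \<and> Im z < h2 (Re z))"
    by blast
  then show ?thesis
  proof cases
    case a
    have "Re z \<noteq> 0" "Re z \<noteq> 1" using a e by auto
    then have x: "0 < Re z" "Re z < 1" using a by auto
    have "winding_number (ograph h1) z - winding_number (ograph h2) z = 1"
      by (rule wn_between[OF c1 c2 e zs x a(3) a(4)])
    moreover have "gI h1 z = 1" "gI h2 z = 0" using a by (auto simp: gI_def)
    ultimately show ?thesis by simp
  next
    case b
    have "Re z \<noteq> 0" "Re z \<noteq> 1" using b e by auto
    then have x: "0 < Re z" "Re z < 1" using b by auto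
    have "winding_number (ograph h2) z - winding_number (ograph h1) z = 1"
      by (rule wn_between[OF c2 c1 e(2) e(1) e(4) e(3) zs x b(3) b(4)])
    moreover have "gI h1 z = 0" "gI h2 z = 1" using b by (auto simp: gI_def)
    ultimately show ?thesis by (simp add: algebra_simps)
  next
    case c
    have p1: "path (ograph h1)" and p2: "path (ograph h2)" using c1 c2 by (auto intro: path_ograph)
    have "winding_number (ograph h1) z = winding_number (ograph h2) z"
    proof (rule wn_vertical_homotopy[OF p1 p2])
      fix t :: real assume t: "t \<in> {0..1}" "Re z = 1 - t"
      then have r: "0 \<le> Re z" "Re z \<le> 1" "1 - t = Re z" by auto
      show "Im z < Im (ograph h1 t) \<and> Im z < Im (ograph h2 t) \<or> Im (ograph h1 t) < Im z \<and> Im (ograph h2 t) < Im z"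
        unfolding Im_ograph r(3) using c r ne1[OF r(1,2)] ne2[OF r(1,2)] by auto
    qed (use e in \<open>auto simp: Re_ograph\<close>)
    moreover have "gI h1 z = gI h2 z"
      using c ne1 ne2 by (auto simp: gI_def)
    ultimately show ?thesis by simp
  qed
qed



lemma smooth_props:
  assumes "smooth_on_unit h"
  shows "continuous_on {0..1} h" "\<And>x. x \<in> {0<..<1} \<Longrightarrow> h differentiable (at x)"
proof -
  obtain D :: "nat \<Rightarrow> real \<Rightarrow> real" where D0: "\<forall>x\<in>{0..1}. D 0 x = h x"
    and Dd: "\<forall>k. \<forall>x\<in>{0..1}. (D k has_real_derivative D (Suc k) x) (at x within {0..1})"
    using assms unfolding smooth_on_unit_def by blast
  have "continuous_on {0..1} (D 0)"
    unfolding continuous_on_eq_continuous_within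
    using Dd by (auto intro: DERIV_continuous)
  then show "continuous_on {0..1} h"
    using D0 by (metis continuous_on_cong)
  fix x :: real assume x: "x \<in> {0<..<1}"
  then have "(D 0 has_real_derivative D 1 x) (at x)"
    using Dd by (metis at_within_Icc_at greaterThanLessThan_iff less_eq_real_def One_nat_def atLeastAtMost_iff)
  then have "(h has_real_derivative D 1 x) (at x)"
    by (rule has_field_derivative_transform_within_open[where S="{0<..<1}"]) (use x D0 in auto)
  then show "h differentiable (at x)"
    using real_differentiable_def by blast
qed

lemma negligible_ograph:
  assumes c: "continuous_on {0..1} h" and d: "\<And>x. x \<in> {0<..<1} \<Longrightarrow> h differentiable (at x)"
  shows "negligible (path_image (ograph h))"
proof -
  have "(\<lambda>x. Complex x (h x)) differentiable_on {0<..<1}"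
  proof (rule differentiable_at_imp_differentiable_on)
    fix x :: real assume "x \<in> {0<..<1}"
    then obtain D where "(h has_real_derivative D) (at x)"
      using d real_differentiable_def by blast
    then have "((\<lambda>x. complex_of_real x + \<i> * complex_of_real (h x)) has_vector_derivative
                 (of_real 1 + \<i> * of_real D)) (at x)"
      by (auto intro!: derivative_eq_intros)
    then show "(\<lambda>x. Complex x (h x)) differentiable (at x)"
      unfolding Complex_eq[symmetric] by (auto intro: differentiableI_vector)
  qed
  then have n1: "negligible ((\<lambda>x. Complex x (h x)) ` {0<..<1})"
    by (intro negligible_differentiable_image_lowdim) auto
  have "path_image (ograph h) = (\<lambda>x. Complex x (h x)) ` {0<..<1} \<union> {Complex 0 (h 0), Complex 1 (h 1)}"
    unfolding path_image_ograph by (auto simp: image_iff less_eq_real_def)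
  then show ?thesis using n1 by simp
qed

lemma negligible_valid_path:
  fixes g :: "real \<Rightarrow> complex"
  assumes "valid_path g" shows "negligible (path_image g)"
proof -
  obtain S where S: "finite S" and C1: "g C1_differentiable_on {0..1} - S"
    using assms by (auto simp: valid_path_def piecewise_C1_differentiable_on_def)
  have "g differentiable_on {0..1} - S"
    using C1 by (auto simp: C1_differentiable_on_def differentiable_at_imp_differentiable_on
      intro!: differentiable_at_imp_differentiable_on intro: differentiableI_vector)
  then have n1: "negligible (g ` ({0..1} - S))"
    by (intro negligible_differentiable_image_lowdim) auto
  have "path_image g \<subseteq> g ` ({0..1} - S) \<union> g ` S"
    by (auto simp: path_image_def)
  moreover have "negligible (g ` ({0..1} - S) \<union> g ` S)"
    using n1 S by auto
  ultimately show ?thesis by (rule negligible_subset[rotated])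
qed

lemma negligible_closed_null:
  fixes S :: "complex set"
  assumes "negligible S" "closed S"
  shows "S \<in> null_sets lborel"
proof -
  have "S \<in> sets lborel" using assms(2) by (simp add: borel_closed)
  moreover have "S \<in> null_sets lebesgue" using assms(1) negligible_iff_null_sets by blast
  ultimately show ?thesis using null_sets_completion_iff by blast
qed

definition mi :: "(real \<Rightarrow> complex) \<Rightarrow> complex \<Rightarrow> ennreal" where
  "mi c z = (if z \<in> path_image c then 0 else ennreal (cmod (winding_number c z)))"

lemma mass2_mi: "mass2 c = (\<integral>\<^sup>+ z. mi c z \<partial>lborel)"
  by (simp add: mass2_def mi_def)

lemma mi_measurable:
  assumes "path c" shows "mi c \<in> borel_measurable lborel"
proof -
  have cl: "closed (path_image c)" using assms by (simp add: closed_path_image)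
  have "continuous_on (- path_image c) (\<lambda>z. ennreal (cmod (winding_number c z)))"
  proof -
    have "continuous_on (- path_image c) (winding_number c)"
      using continuous_at_winding_number[OF assms] cl
      by (simp add: continuous_on_eq_continuous_at open_Compl)
    then show ?thesis by (intro continuous_on_ennreal continuous_intros)
  qed
  then have "(\<lambda>z. if z \<in> path_image c then 0 else ennreal (cmod (winding_number c z))) \<in> borel_measurable borel"
    using cl by (intro borel_measurable_continuous_on_if) (auto simp: borel_closed)
  then show ?thesis unfolding mi_def[abs_def] by simp
qed

section \<open>Median\<close>

definition med :: "(nat \<Rightarrow> real \<Rightarrow> real) \<Rightarrow> nat \<Rightarrow> real \<Rightarrow> real" where
  "med f N x = Max ((\<lambda>S. Min ((\<lambda>i. f i x) ` S)) ` {S. S \<subseteq> {..<N} \<and> card S = (N+1) div 2})"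

lemma k1: "1 \<le> (N::nat) \<Longrightarrow> 1 \<le> (N+1) div 2" by presburger
lemma k2: "(N+1) div 2 \<le> (N::nat)" by presburger

lemma fam_props:
  assumes "1 \<le> N"
  shows "finite {S. S \<subseteq> {..<N} \<and> card S = (N+1) div 2}"
    "{S. S \<subseteq> {..<N} \<and> card S = (N+1) div 2} \<noteq> {}"
    "\<And>S. S \<in> {S. S \<subseteq> {..<N} \<and> card S = (N+1) div 2} \<Longrightarrow> finite S \<and> S \<noteq> {}"
proof -
  show "finite {S. S \<subseteq> {..<N} \<and> card S = (N+1) div 2}"
    by (rule finite_subset[of _ "Pow {..<N}"]) auto
  have "{..<(N+1) div 2} \<in> {S. S \<subseteq> {..<N} \<and> card S = (N+1) div 2}" using k2[of N] by auto
  then show "{S. S \<subseteq> {..<N} \<and> card S = (N+1) div 2} \<noteq> {}" by blast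
  fix S assume "S \<in> {S. S \<subseteq> {..<N} \<and> card S = (N+1) div 2}"
  then show "finite S \<and> S \<noteq> {}" using k1[OF assms] finite_subset[of S "{..<N}"] by (auto)
qed

lemma med_props:
  assumes N: "1 \<le> N"
  shows "(N+1) div 2 \<le> card {i. i < N \<and> med f N x \<le> f i x}"
    "card {i. i < N \<and> med f N x < f i x} < (N+1) div 2"
proof -
  define F where "F = {S. S \<subseteq> {..<N} \<and> card S = (N+1) div 2}"
  define g where "g = (\<lambda>S. Min ((\<lambda>i. f i x) ` S))"
  have fp: "finite F" "F \<noteq> {}" "\<And>S. S \<in> F \<Longrightarrow> finite S \<and> S \<noteq> {}"
    using fam_props[OF N] unfolding F_def by blast+
  have md: "med f N x = Max (g ` F)" by (simp add: med_def F_def g_def)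
  have "Max (g ` F) \<in> g ` F" using fp by (intro Max_in) auto
  then obtain S0 where S0: "S0 \<in> F" "med f N x = g S0" using md by auto
  have S0f: "finite S0" "S0 \<noteq> {}" using fp(3)[OF S0(1)] by auto
  have "S0 \<subseteq> {i. i < N \<and> med f N x \<le> f i x}"
  proof
    fix i assume i: "i \<in> S0"
    have "g S0 \<le> f i x" unfolding g_def using S0f i by (intro Min_le) auto
    moreover have "i < N" using S0(1) i unfolding F_def by auto
    ultimately show "i \<in> {i. i < N \<and> med f N x \<le> f i x}" using S0(2) by simp
  qed
  then have "card S0 \<le> card {i. i < N \<and> med f N x \<le> f i x}"
    by (rule card_mono[rotated]) simp
  moreover have "card S0 = (N+1) div 2" using S0(1) unfolding F_def by simp
  ultimately show "(N+1) div 2 \<le> card {i. i < N \<and> med f N x \<le> f i x}" by simp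
  show "card {i. i < N \<and> med f N x < f i x} < (N+1) div 2"
  proof (rule ccontr)
    assume "\<not> ?thesis"
    then have "(N+1) div 2 \<le> card {i. i < N \<and> med f N x < f i x}" by simp
    then obtain T where T: "T \<subseteq> {i. i < N \<and> med f N x < f i x}" "card T = (N+1) div 2" "finite T"
      by (rule obtain_subset_with_card_n)
    have TF: "T \<in> F" using T unfolding F_def by auto
    have "g T \<le> Max (g ` F)" using fp TF by (intro Max_ge) auto
    moreover have Tf: "finite T" "T \<noteq> {}" using fp(3)[OF TF] by auto
    have "med f N x < g T"
      unfolding g_def using T(1) Tf by (subst Min_gr_iff) auto
    ultimately show False using md by simp
  qed
qed

lemma med_const:
  assumes N: "1 \<le> N" and c: "\<And>i. i < N \<Longrightarrow> f i x = c"
  shows "med f N x = c"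
proof -
  let ?F = "{S. S \<subseteq> {..<N} \<and> card S = (N+1) div 2}"
  note fp = fam_props[OF N]
  have "(\<lambda>S. Min ((\<lambda>i. f i x) ` S)) ` ?F = {c}"
  proof -
    have "Min ((\<lambda>i. f i x) ` S) = c" if "S \<in> ?F" for S
    proof -
      have "(\<lambda>i. f i x) ` S = {c}" using fp(3)[OF that] that c by auto
      then show ?thesis by simp
    qed
    then show ?thesis using fp(2) by auto
  qed
  then show ?thesis by (simp add: med_def)
qed

lemma cont_Max:
  assumes "finite I" "I \<noteq> {}" "\<And>i. i \<in> I \<Longrightarrow> continuous_on T (g i)"
  shows "continuous_on T (\<lambda>x. Max ((\<lambda>i. g i x :: real) ` I))"
  using assms
proof (induction I rule: finite_ne_induct)
  case (singleton i) then show ?case by simp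
next
  case (insert i I)
  have "continuous_on T (\<lambda>x. max (g i x) (Max ((\<lambda>i. g i x) ` I)))"
    using insert by (intro continuous_on_max) auto
  then show ?case using insert by (simp add: Max_insert)
qed

lemma cont_Min:
  assumes "finite I" "I \<noteq> {}" "\<And>i. i \<in> I \<Longrightarrow> continuous_on T (g i)"
  shows "continuous_on T (\<lambda>x. Min ((\<lambda>i. g i x :: real) ` I))"
  using assms
proof (induction I rule: finite_ne_induct)
  case (singleton i) then show ?case by simp
next
  case (insert i I)
  have "continuous_on T (\<lambda>x. min (g i x) (Min ((\<lambda>i. g i x) ` I)))"
    using insert by (intro continuous_on_min) auto
  then show ?case using insert by (simp add: Min_insert)
qed

lemma med_cont:
  assumes N: "1 \<le> N" and c: "\<And>i. i < N \<Longrightarrow> continuous_on T (f i)"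
  shows "continuous_on T (med f N)"
proof -
  note fp = fam_props[OF N]
  have "continuous_on T (\<lambda>x. Max ((\<lambda>S. Min ((\<lambda>i. f i x) ` S)) ` {S. S \<subseteq> {..<N} \<and> card S = (N+1) div 2}))"
  proof (rule cont_Max[OF fp(1) fp(2)])
    fix S assume S: "S \<in> {S. S \<subseteq> {..<N} \<and> card S = (N+1) div 2}"
    show "continuous_on T (\<lambda>x. Min ((\<lambda>i. f i x) ` S))"
      using fp(3)[OF S] S c by (intro cont_Min) auto
  qed
  then show ?thesis unfolding med_def[abs_def] .
qed

lemma sum_ind_split:
  fixes t :: real and N :: nat
  shows "(\<Sum>i<N. \<bar>(if Q i then 1 else 0) - t\<bar>) =
     real (card {i. i < N \<and> Q i}) * \<bar>1 - t\<bar> + real (card {i. i < N \<and> \<not> Q i}) * \<bar>t\<bar>"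
proof -
  have "(\<Sum>i<N. \<bar>(if Q i then 1 else 0) - t\<bar>) = (\<Sum>i<N. if Q i then \<bar>1 - t\<bar> else \<bar>t\<bar>)"
    by (intro sum.cong) auto
  also have "\<dots> = (\<Sum>i\<in>{..<N} \<inter> {i. Q i}. \<bar>1 - t\<bar>) + (\<Sum>i\<in>{..<N} \<inter> - {i. Q i}. \<bar>t\<bar>)"
    by (subst sum.If_cases) auto
  also have "{..<N} \<inter> {i. Q i} = {i. i < N \<and> Q i}" by auto
  also have "{..<N} \<inter> - {i. Q i} = {i. i < N \<and> \<not> Q i}" by auto
  finally show ?thesis by simp
qed

lemma card_split_N0: "card {i. i < (N::nat) \<and> Q i} + card {i. i < N \<and> \<not> Q i} = N"
proof -
  have "card ({i. i < N \<and> Q i} \<union> {i. i < N \<and> \<not> Q i}) = card {i. i < N \<and> Q i} + card {i. i < N \<and> \<not> Q i}"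
    by (rule card_Un_disjoint) auto
  moreover have "{i. i < N \<and> Q i} \<union> {i. i < N \<and> \<not> Q i} = {..<N}" by auto
  ultimately show ?thesis by simp
qed

lemma card_split_N: "card {i. i < (N::nat) \<and> Q i} + card {i. i < N \<and> \<not> Q i} = N"
  using card_split_N0 .

lemma median_ineq:
  fixes a :: "nat \<Rightarrow> real" and m y t :: real
  assumes N: "1 \<le> N"
    and P1: "(N+1) div 2 \<le> card {i. i < N \<and> m \<le> a i}"
    and P2: "card {i. i < N \<and> m < a i} < (N+1) div 2"
  shows "(\<Sum>i<N. \<bar>(if y < a i then 1 else 0) - (if y < m then 1 else 0)\<bar>)
         \<le> (\<Sum>i<N. \<bar>(if y < a i then 1 else (0::real)) - t\<bar>)"
proof -
  define p where "p = card {i. i < N \<and> y < a i}"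
  define q where "q = card {i. i < N \<and> \<not> y < a i}"
  have pq: "p + q = N" unfolding p_def q_def by (rule card_split_N)
  have St: "(\<Sum>i<N. \<bar>(if y < a i then 1 else (0::real)) - t\<bar>) = real p * \<bar>1 - t\<bar> + real q * \<bar>t\<bar>"
    unfolding p_def q_def by (rule sum_ind_split)
  have Sb: "(\<Sum>i<N. \<bar>(if y < a i then 1 else (0::real)) - (if y < m then 1 else 0)\<bar>)
     = real p * \<bar>1 - (if y < m then 1 else 0)\<bar> + real q * \<bar>(if y < m then 1 else 0)\<bar>"
    unfolding p_def q_def by (rule sum_ind_split)
  have tt: "1 \<le> \<bar>1 - t\<bar> + \<bar>t\<bar>" by linarith
  have k2: "N \<le> 2 * ((N+1) div 2)" "2 * ((N+1) div 2) \<le> N + 1" by auto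
  show ?thesis
  proof (cases "y < m")
    case True
    have "{i. i < N \<and> m \<le> a i} \<subseteq> {i. i < N \<and> y < a i}" using True by auto
    then have "card {i. i < N \<and> m \<le> a i} \<le> p" unfolding p_def by (intro card_mono) auto
    then have "q \<le> p" using P1 k2 pq by linarith
    then have qp: "real q \<le> real p" by simp
    have "real q * 1 \<le> real q * (\<bar>1 - t\<bar> + \<bar>t\<bar>)" using tt by (intro mult_left_mono) auto
    moreover have "real q * \<bar>1 - t\<bar> \<le> real p * \<bar>1 - t\<bar>" using qp by (intro mult_right_mono) auto
    moreover have "real q * (\<bar>1 - t\<bar> + \<bar>t\<bar>) = real q * \<bar>1 - t\<bar> + real q * \<bar>t\<bar>"
      by (rule distrib_left)
    ultimately have "real q \<le> real p * \<bar>1 - t\<bar> + real q * \<bar>t\<bar>" by linarith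
    moreover have "real p * \<bar>1 - (if y < m then 1 else 0)\<bar> + real q * \<bar>(if y < m then 1 else 0)\<bar> = real q"
      using True by simp
    ultimately show ?thesis using St Sb by linarith
  next
    case False
    have "{i. i < N \<and> y < a i} \<subseteq> {i. i < N \<and> m < a i}" using False by auto
    then have "p \<le> card {i. i < N \<and> m < a i}" unfolding p_def by (intro card_mono) auto
    then have "p \<le> q" using P2 k2 pq by linarith
    then have qp: "real p \<le> real q" by simp
    have "real p * 1 \<le> real p * (\<bar>1 - t\<bar> + \<bar>t\<bar>)" using tt by (intro mult_left_mono) auto
    moreover have "real p * \<bar>t\<bar> \<le> real q * \<bar>t\<bar>" using qp by (intro mult_right_mono) auto
    moreover have "real p * (\<bar>1 - t\<bar> + \<bar>t\<bar>) = real p * \<bar>1 - t\<bar> + real p * \<bar>t\<bar>"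
      by (rule distrib_left)
    ultimately have "real p \<le> real p * \<bar>1 - t\<bar> + real q * \<bar>t\<bar>" by linarith
    moreover have "real p * \<bar>1 - (if y < m then 1 else 0)\<bar> + real q * \<bar>(if y < m then 1 else 0)\<bar> = real p"
      using False by simp
    ultimately show ?thesis using St Sb by linarith
  qed
qed

lemma gI_median:
  assumes N: "1 \<le> N"
  shows "(\<Sum>i<N. \<bar>gI (f i) z - gI (med f N) z\<bar>) \<le> (\<Sum>i<N. \<bar>gI (f i) z - t\<bar>)"
proof (cases "0 \<le> Re z \<and> Re z \<le> 1")
  case True
  have e1: "gI h z = (if Im z < h (Re z) then 1 else 0)" for h using True by (simp add: gI_def)
  have "(\<Sum>i<N. \<bar>(if Im z < f i (Re z) then 1 else 0) - (if Im z < med f N (Re z) then 1 else 0)\<bar>)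
         \<le> (\<Sum>i<N. \<bar>(if Im z < f i (Re z) then 1 else (0::real)) - t\<bar>)"
    by (rule median_ineq[where a="\<lambda>i. f i (Re z)" and m="med f N (Re z)" and y="Im z" and t=t, OF N
       med_props(1)[OF N, of f "Re z"] med_props(2)[OF N, of f "Re z"]])
  then show ?thesis unfolding e1 .
next
  case False
  have e0: "gI h z = 0" for h using False by (auto simp: gI_def)
  have "0 \<le> (\<Sum>i<N. \<bar>gI (f i) z - t\<bar>)" by (intro sum_nonneg) auto
  then show ?thesis unfolding e0 by simp
qed



lemma exists_cell:
  fixes x :: real and n :: nat
  assumes "0 \<le> x" "x \<le> 1" "0 < n"
  shows "\<exists>j<n. real j / n \<le> x \<and> x \<le> (real j + 1) / n"
proof (cases "x < 1")
  case True
  define j where "j = nat \<lfloor>x * n\<rfloor>"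
  have fl: "real_of_int \<lfloor>x * n\<rfloor> \<le> x * n" "x * n < real_of_int \<lfloor>x * n\<rfloor> + 1" by linarith+
  have fl0: "0 \<le> \<lfloor>x * n\<rfloor>" using assms by simp
  then have jr: "real j = real_of_int \<lfloor>x * n\<rfloor>" by (simp add: j_def)
  have "x * n < n" using True assms by simp
  then have "real j < n" using fl jr by linarith
  then have "j < n" by simp
  moreover have "real j / n \<le> x" using fl jr assms by (simp add: divide_le_eq)
  moreover have "x \<le> (real j + 1) / n" using fl jr assms by (simp add: le_divide_eq)
  ultimately show ?thesis by blast
next
  case False
  then have x1: "x = 1" using assms by simp
  have "n - 1 < n" using assms by simp
  moreover have "real (n - 1) / n \<le> x" using x1 assms by (simp add: divide_le_eq of_nat_diff)
  moreover have "x \<le> (real (n - 1) + 1) / n" using x1 assms by (simp add: of_nat_diff)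
  ultimately show ?thesis by blast
qed

lemma box_cover:
  assumes cm: "continuous_on {0..1} m" and d: "0 < \<delta>"
  shows "\<exists>E. E \<in> sets lborel \<and> emeasure lborel E \<le> ennreal (4 * \<delta>) \<and>
     (\<forall>z. 0 \<le> Re z \<and> Re z \<le> 1 \<and> \<bar>Im z - m (Re z)\<bar> \<le> \<delta> \<longrightarrow> z \<in> E)"
proof -
  have "uniformly_continuous_on {0..1} m"
    using cm by (intro compact_uniformly_continuous) auto
  then obtain \<eta> where eta: "\<eta> > 0" and ue: "\<And>x x'. x \<in> {0..1} \<Longrightarrow> x' \<in> {0..1} \<Longrightarrow> dist x' x < \<eta> \<Longrightarrow> dist (m x') (m x) < \<delta>"
    unfolding uniformly_continuous_on_def using d by metis
  obtain n :: nat where n: "n \<noteq> 0" "inverse (real n) < \<eta>"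
    using real_arch_inverse eta by blast
  define bx where "bx j = cbox (Complex (real j / n) (m (real j / n) - 2*\<delta>)) (Complex ((real j + 1) / n) (m (real j / n) + 2*\<delta>))" for j :: nat
  define E where "E = (\<Union>j<n. bx j)"
  have sets: "E \<in> sets lborel" unfolding E_def bx_def by auto
  have mb: "emeasure lborel (bx j) = ennreal (1 / n * (4 * \<delta>))" for j
  proof -
    have "emeasure lborel (bx j) = ennreal ((((real j + 1) / n) - real j / n) * ((m (real j / n) + 2*\<delta>) - (m (real j / n) - 2*\<delta>)))"
      unfolding bx_def using d n by (simp add: emeasure_lborel_cbox_eq Basis_complex_def divide_right_mono)
    also have "(real j + 1) / n - real j / n = 1 / n" by (simp add: diff_divide_distrib[symmetric])
    finally show ?thesis by simp
  qed
  have "emeasure lborel E \<le> (\<Sum>j<n. emeasure lborel (bx j))"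
    unfolding E_def by (rule emeasure_subadditive_finite) (auto simp: bx_def)
  also have "\<dots> = ennreal (real n * (1 / n * (4 * \<delta>)))"
    using d by (simp add: mb ennreal_of_nat_eq_real_of_nat ennreal_mult[symmetric])
  also have "real n * (1 / n * (4 * \<delta>)) = 4 * \<delta>" using n by simp
  finally have meas: "emeasure lborel E \<le> ennreal (4 * \<delta>)" .
  have cov: "z \<in> E" if z: "0 \<le> Re z" "Re z \<le> 1" "\<bar>Im z - m (Re z)\<bar> \<le> \<delta>" for z
  proof -
    obtain j where j: "j < n" "real j / n \<le> Re z" "Re z \<le> (real j + 1) / n"
      using exists_cell[OF z(1,2)] n by auto
    have j01: "real j / n \<in> {0..1}" using j by (auto simp: divide_le_eq)
    have "Re z - real j / n \<le> 1 / n" using j(3) by (simp add: add_divide_distrib)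
    then have "dist (Re z) (real j / n) < \<eta>" using j(2) n by (simp add: dist_real_def inverse_eq_divide)
    then have "dist (m (Re z)) (m (real j / n)) < \<delta>" using ue[OF j01, of "Re z"] z by auto
    then have "\<bar>Im z - m (real j / n)\<bar> \<le> 2 * \<delta>" using z(3) by (simp add: dist_real_def)
    then have "z \<in> bx j" using j by (auto simp: bx_def cbox_complex_eq)
    then show ?thesis using j(1) by (auto simp: E_def)
  qed
  show ?thesis using sets meas cov by blast
qed

lemma poly_approx:
  assumes cm: "continuous_on {0..1} m" and d: "0 < \<delta>"
  obtains p where "continuous_on {0..1} p" "\<And>x. x \<in> {0<..<1} \<Longrightarrow> p differentiable (at x)"
    "valid_path (ograph p)" "p 0 = m 0" "p 1 = m 1" "\<And>x. x \<in> {0..1} \<Longrightarrow> \<bar>p x - m x\<bar> \<le> \<delta>"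
proof -
  obtain g where g: "real_polynomial_function g" "\<And>x. x \<in> {0..1} \<Longrightarrow> \<bar>m x - g x\<bar> < \<delta>/3"
    using Stone_Weierstrass_real_polynomial_function[of "{0..1::real}" m "\<delta>/3"] cm d by auto
  define p where "p x = g x + (m 0 - g 0) * (1 - x) + (m 1 - g 1) * x" for x
  have rp: "real_polynomial_function p"
    unfolding p_def[abs_def] using g(1)
    by (intro real_polynomial_function.intros(3,4) real_polynomial_function_diff real_polynomial_function.intros(2))
       (auto intro: real_polynomial_function.intros(1) bounded_linear_ident)
  obtain p' where p': "real_polynomial_function p'" "\<And>x. (p has_real_derivative p' x) (at x)"
    using has_real_derivative_polynomial_function[OF rp] by blast
  have contp: "continuous_on S p" for S
    using rp by (simp add: real_polynomial_function_eq continuous_on_polymonial_function)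
  have contp': "continuous_on S p'" for S
    using p'(1) by (simp add: real_polynomial_function_eq continuous_on_polymonial_function)
  have diffp: "p differentiable (at x)" for x
    using p'(2) real_differentiable_def by blast
  have vd: "((\<lambda>t. Complex (1 - t) (p (1 - t))) has_vector_derivative
             (- 1 + \<i> * complex_of_real (p' (1 - t) * (- 1)))) (at t)" for t
  proof -
    have dp: "((\<lambda>t. p (1 - t)) has_real_derivative (p' (1 - t) * (- 1))) (at t)"
      by (rule DERIV_chain2[OF p'(2)]) (auto intro!: derivative_eq_intros)
    have "((\<lambda>t. complex_of_real (1 - t) + \<i> * complex_of_real (p (1 - t))) has_vector_derivative
             (- 1 + \<i> * complex_of_real (p' (1 - t) * (- 1)))) (at t)"
      by (auto intro!: derivative_eq_intros dp)
    then show ?thesis by (simp add: Complex_eq)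
  qed
  have "(\<lambda>t. Complex (1 - t) (p (1 - t))) C1_differentiable_on {0..1}"
    unfolding C1_differentiable_on_def
  proof (intro exI conjI ballI)
    show "continuous_on {0..1} (\<lambda>t. - 1 + \<i> * complex_of_real (p' (1 - t) * (- 1)))"
      by (intro continuous_intros continuous_on_compose2[OF contp'[of UNIV]]) auto
  qed (rule vd)
  then have vp: "valid_path (ograph p)"
    unfolding valid_path_def ograph_def by (rule C1_differentiable_imp_piecewise)
  have p0: "p 0 = m 0" and p1: "p 1 = m 1" by (simp_all add: p_def)
  have close: "\<bar>p x - m x\<bar> \<le> \<delta>" if x: "x \<in> {0..1}" for x
  proof -
    have a: "\<bar>m x - g x\<bar> < \<delta>/3" "\<bar>m 0 - g 0\<bar> < \<delta>/3" "\<bar>m 1 - g 1\<bar> < \<delta>/3" using g(2) x by auto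
    have "\<bar>(m 0 - g 0) * (1 - x)\<bar> = \<bar>m 0 - g 0\<bar> * (1 - x)" using x by (simp add: abs_mult)
    also have "\<dots> \<le> \<delta>/3 * (1 - x)" by (rule mult_right_mono) (use a x in auto)
    finally have b1: "\<bar>(m 0 - g 0) * (1 - x)\<bar> \<le> \<delta>/3 * (1 - x)" .
    have "\<bar>(m 1 - g 1) * x\<bar> = \<bar>m 1 - g 1\<bar> * x" using x by (simp add: abs_mult)
    also have "\<dots> \<le> \<delta>/3 * x" by (rule mult_right_mono) (use a x in auto)
    finally have b2: "\<bar>(m 1 - g 1) * x\<bar> \<le> \<delta>/3 * x" .
    from b1 b2 have "\<bar>p x - m x\<bar> \<le> \<delta>/3 + \<delta>/3 * (1 - x) + \<delta>/3 * x"
      using a unfolding p_def by linarith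
    also have "\<dots> = 2 * \<delta> / 3" by (simp add: field_simps)
    also have "\<dots> \<le> \<delta>" using d by simp
    finally show ?thesis .
  qed
  show ?thesis using that[OF contp diffp vp p0 p1 close] by blast
qed



lemma gI_diff_le:
  assumes pm: "\<And>x. x \<in> {0..1} \<Longrightarrow> \<bar>p x - m x\<bar> \<le> \<delta>"
    and Ecov: "\<And>z. 0 \<le> Re z \<and> Re z \<le> 1 \<and> \<bar>Im z - m (Re z)\<bar> \<le> \<delta> \<Longrightarrow> z \<in> E"
  shows "\<bar>gI m z - gI p z\<bar> \<le> indicator E z"
proof (cases "gI m z = gI p z")
  case True then show ?thesis by (simp add: indicator_def)
next
  case False
  then have r: "0 \<le> Re z" "Re z \<le> 1" and ne: "(Im z < m (Re z)) \<noteq> (Im z < p (Re z))"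
    by (auto simp: gI_def split: if_splits)
  have "\<bar>p (Re z) - m (Re z)\<bar> \<le> \<delta>" using pm r by auto
  then have "\<bar>Im z - m (Re z)\<bar> \<le> \<delta>" using ne by (auto simp: abs_if split: if_splits)
  then have "z \<in> E" using Ecov r by blast
  moreover have "\<bar>gI m z - gI p z\<bar> \<le> 1" by (simp add: gI_def)
  ultimately show ?thesis by simp
qed

lemma pointwise:
  fixes f :: "nat \<Rightarrow> real \<Rightarrow> real" and N :: nat
  assumes N: "1 \<le> N" and fc: "\<And>i. i < N \<Longrightarrow> continuous_on {0..1} (f i)"
    and fA: "\<And>i. i < N \<Longrightarrow> f i 0 = A \<and> f i 1 = B"
    and pc: "continuous_on {0..1} p" and p0: "p 0 = A" and p1: "p 1 = B"
    and pm: "\<And>x. x \<in> {0..1} \<Longrightarrow> \<bar>p x - med f N x\<bar> \<le> \<delta>"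
    and Ecov: "\<And>z. 0 \<le> Re z \<and> Re z \<le> 1 \<and> \<bar>Im z - med f N (Re z)\<bar> \<le> \<delta> \<Longrightarrow> z \<in> E"
    and g: "path \<gamma>" "pathfinish \<gamma> = Complex 0 A"
    and zg: "z \<notin> path_image \<gamma>" and zf: "\<And>i. i < N \<Longrightarrow> z \<notin> path_image (ograph (f i))"
    and zp: "z \<notin> path_image (ograph p)" and zs: "z \<notin> closed_segment (Complex 1 B) (Complex 0 A)"
  shows "(\<Sum>i<N. mi (ograph (f i) +++ reversepath (ograph p)) z)
         \<le> (\<Sum>i<N. mi (ograph (f i) +++ reversepath \<gamma>) z) + of_nat N * indicator E z"
proof -
  have pp: "path (ograph p)" using pc by (rule path_ograph)
  have pf: "path (ograph (f i))" if "i < N" for i using fc[OF that] by (rule path_ograph)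
  have f0: "0 < N" using N by simp
  define v where "v = winding_number (ograph (f 0)) z - complex_of_real (gI (f 0) z) - winding_number \<gamma> z"
  have e1: "mi (ograph (f i) +++ reversepath (ograph p)) z = ennreal \<bar>gI (f i) z - gI p z\<bar>" if i: "i < N" for i
  proof -
    have fin: "pathfinish (ograph (f i)) = pathstart (reversepath (ograph p))" using fA[OF i] p0 by simp
    have "z \<notin> path_image (ograph (f i) +++ reversepath (ograph p))"
      using zf[OF i] zp path_image_join[OF fin] by simp
    moreover have "winding_number (ograph (f i) +++ reversepath (ograph p)) z
        = winding_number (ograph (f i)) z - winding_number (ograph p) z"
      using pf[OF i] pp zf[OF i] zp fin by (simp add: winding_number_join winding_number_reversepath)
    moreover have "winding_number (ograph (f i)) z - winding_number (ograph p) z = complex_of_real (gI (f i) z - gI p z)"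
      by (rule wn_graph_diff[OF fc[OF i] pc _ p0 _ p1 zf[OF i] zp zs]) (use fA[OF i] in auto)
    ultimately show ?thesis by (simp add: mi_def flip: of_real_diff)
  qed
  have e2: "mi (ograph (f i) +++ reversepath \<gamma>) z = ennreal (cmod (complex_of_real (gI (f i) z) + v))" if i: "i < N" for i
  proof -
    have fin: "pathfinish (ograph (f i)) = pathstart (reversepath \<gamma>)" using fA[OF i] g by simp
    have "z \<notin> path_image (ograph (f i) +++ reversepath \<gamma>)"
      using zf[OF i] zg path_image_join[OF fin] by simp
    moreover have W: "winding_number (ograph (f i) +++ reversepath \<gamma>) z
        = winding_number (ograph (f i)) z - winding_number \<gamma> z"
      using pf[OF i] g zf[OF i] zg fin by (simp add: winding_number_join winding_number_reversepath)
    moreover have D: "winding_number (ograph (f i)) z - winding_number (ograph (f 0)) z = complex_of_real (gI (f i) z - gI (f 0) z)"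
      by (rule wn_graph_diff[OF fc[OF i] fc[OF f0] _ _ _ _ zf[OF i] zf[OF f0] zs]) (use fA[OF i] fA[OF f0] in auto)
    have D': "winding_number (ograph (f i)) z - winding_number (ograph (f 0)) z = complex_of_real (gI (f i) z) - complex_of_real (gI (f 0) z)"
      using D by simp
    have "winding_number (ograph (f i) +++ reversepath \<gamma>) z = complex_of_real (gI (f i) z) + v"
      using W D' unfolding v_def by algebra
    ultimately show ?thesis by (simp add: mi_def)
  qed
  have real_ineq: "(\<Sum>i<N. \<bar>gI (f i) z - gI p z\<bar>) \<le> (\<Sum>i<N. cmod (complex_of_real (gI (f i) z) + v)) + real N * indicator E z"
  proof -
    have "(\<Sum>i<N. \<bar>gI (f i) z - gI p z\<bar>) \<le> (\<Sum>i<N. \<bar>gI (f i) z - gI (med f N) z\<bar> + \<bar>gI (med f N) z - gI p z\<bar>)"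
      by (intro sum_mono) linarith
    also have "\<dots> = (\<Sum>i<N. \<bar>gI (f i) z - gI (med f N) z\<bar>) + real N * \<bar>gI (med f N) z - gI p z\<bar>"
      by (simp add: sum.distrib)
    also have "(\<Sum>i<N. \<bar>gI (f i) z - gI (med f N) z\<bar>) \<le> (\<Sum>i<N. \<bar>gI (f i) z - (- Re v)\<bar>)"
      by (rule gI_median[OF N])
    also have "(\<Sum>i<N. \<bar>gI (f i) z - (- Re v)\<bar>) \<le> (\<Sum>i<N. cmod (complex_of_real (gI (f i) z) + v))"
    proof (intro sum_mono)
      fix i
      have "\<bar>Re (complex_of_real (gI (f i) z) + v)\<bar> \<le> cmod (complex_of_real (gI (f i) z) + v)"
        by (rule abs_Re_le_cmod)
      then show "\<bar>gI (f i) z - - Re v\<bar> \<le> cmod (complex_of_real (gI (f i) z) + v)" by simp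
    qed
    also have "real N * \<bar>gI (med f N) z - gI p z\<bar> \<le> real N * indicator E z"
      by (intro mult_left_mono gI_diff_le[OF pm Ecov]) auto
    finally show ?thesis by simp
  qed
  have "(\<Sum>i<N. mi (ograph (f i) +++ reversepath (ograph p)) z) = ennreal (\<Sum>i<N. \<bar>gI (f i) z - gI p z\<bar>)"
    using e1 by (simp add: sum_ennreal)
  also have "\<dots> \<le> ennreal ((\<Sum>i<N. cmod (complex_of_real (gI (f i) z) + v)) + real N * indicator E z)"
    by (rule ennreal_leI[OF real_ineq])
  also have "\<dots> = (\<Sum>i<N. ennreal (cmod (complex_of_real (gI (f i) z) + v))) + of_nat N * indicator E z"
    by (simp add: sum_ennreal ennreal_plus sum_nonneg ennreal_mult ennreal_of_nat_eq_real_of_nat indicator_def)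
  also have "(\<Sum>i<N. ennreal (cmod (complex_of_real (gI (f i) z) + v))) = (\<Sum>i<N. mi (ograph (f i) +++ reversepath \<gamma>) z)"
    using e2 by simp
  finally show ?thesis .
qed



theorem mainTheorem6:
  fixes f :: "nat \<Rightarrow> real \<Rightarrow> real" and N :: nat and lam :: real
  assumes "N \<ge> 1"
    and "\<And>i. i < N \<Longrightarrow> smooth_on_unit (f i)"
    and "\<And>i. i < N \<Longrightarrow> f i 0 = f 0 0 \<and> f i 1 = f 0 1"
    and "lam > 0"
  shows "(INF \<gamma> \<in> {\<gamma>. competitor f \<gamma> \<and> \<not> is_graph_param \<gamma>}. median_obj lam f N \<gamma>)
         \<ge> (INF g \<in> {g. competitor f (ograph g)}. median_obj lam f N (ograph g))"
proof -
  note N = assms(1)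
  define A where "A = f 0 0"
  define B where "B = f 0 1"
  have fc: "\<And>i. i < N \<Longrightarrow> continuous_on {0..1} (f i)" by (rule smooth_props(1)[OF assms(2)])
  have fd: "\<And>i x. i < N \<Longrightarrow> x \<in> {0<..<1} \<Longrightarrow> f i differentiable (at x)"
    by (rule smooth_props(2)[OF assms(2)])
  have fA: "\<And>i. i < N \<Longrightarrow> f i 0 = A \<and> f i 1 = B" unfolding A_def B_def by (rule assms(3))
  define m where "m = med f N"
  have mc: "continuous_on {0..1} m" unfolding m_def by (rule med_cont[OF N fc])
  have m0: "m 0 = A" unfolding m_def by (rule med_const[OF N]) (use fA in auto)
  have m1: "m 1 = B" unfolding m_def by (rule med_const[OF N]) (use fA in auto)
  have lam: "lam > 0" by (rule assms(4))
  let ?R = "INF g \<in> {g. competitor f (ograph g)}. median_obj lam f N (ograph g)"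
  show ?thesis
  proof (rule INF_greatest)
    fix \<gamma> assume "\<gamma> \<in> {\<gamma>. competitor f \<gamma> \<and> \<not> is_graph_param \<gamma>}"
    then have vg: "valid_path \<gamma>" and sg: "pathstart \<gamma> = Complex 1 B" and fg: "pathfinish \<gamma> = Complex 0 A"
      by (auto simp: competitor_def A_def B_def)
    have pg: "path \<gamma>" using vg by (rule valid_path_imp_path)
    show "?R \<le> median_obj lam f N \<gamma>"
    proof (rule ennreal_le_epsilon)
      fix e :: real assume e: "0 < e"
      define \<delta> where "\<delta> = e / (4 * real N * lam)"
      have d: "0 < \<delta>" unfolding \<delta>_def using e lam N by simp
      obtain E where E: "E \<in> sets lborel" "emeasure lborel E \<le> ennreal (4 * \<delta>)"
        "\<And>z. 0 \<le> Re z \<and> Re z \<le> 1 \<and> \<bar>Im z - m (Re z)\<bar> \<le> \<delta> \<Longrightarrow> z \<in> E"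
        using box_cover[OF mc d] by blast
      obtain p where pc: "continuous_on {0..1} p" and pd: "\<And>x. x \<in> {0<..<1} \<Longrightarrow> p differentiable (at x)"
        and vp: "valid_path (ograph p)" and p0: "p 0 = A" and p1: "p 1 = B"
        and pm: "\<And>x. x \<in> {0..1} \<Longrightarrow> \<bar>p x - m x\<bar> \<le> \<delta>"
        using poly_approx[OF mc d] m0 m1 by metis
      have "p \<in> {g. competitor f (ograph g)}"
        using vp p0 p1 by (simp add: competitor_def A_def B_def)
      then have R: "?R \<le> median_obj lam f N (ograph p)" by (rule INF_lower)
      define cp where "cp i = ograph (f i) +++ reversepath (ograph p)" for i
      define cg where "cg i = ograph (f i) +++ reversepath \<gamma>" for i
      have pp: "path (ograph p)" using pc by (rule path_ograph)
      have pcp: "path (cp i)" if "i < N" for i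
        unfolding cp_def using path_ograph[OF fc[OF that]] pp fA[OF that] p0 by (auto intro!: path_join_imp)
      have pcg: "path (cg i)" if "i < N" for i
        unfolding cg_def using path_ograph[OF fc[OF that]] pg fA[OF that] fg by (auto intro!: path_join_imp)
      define Bad where "Bad = path_image \<gamma> \<union> (\<Union>i<N. path_image (ograph (f i))) \<union> path_image (ograph p)
          \<union> closed_segment (Complex 1 B) (Complex 0 A)"
      have nullB: "Bad \<in> null_sets lborel"
      proof -
        have "path_image \<gamma> \<in> null_sets lborel"
          by (intro negligible_closed_null negligible_valid_path vg closed_path_image pg)
        moreover have "(\<Union>i<N. path_image (ograph (f i))) \<in> null_sets lborel"
          by (intro null_sets_UN' negligible_closed_null negligible_ograph closed_path_image path_ograph fc fd) auto
        moreover have "path_image (ograph p) \<in> null_sets lborel"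
          by (intro negligible_closed_null negligible_ograph closed_path_image path_ograph pc pd)
        moreover have "closed_segment (Complex 1 B) (Complex 0 A) \<in> null_sets lborel"
        proof -
          have "negligible (path_image (linepath (Complex 1 B) (Complex 0 A)))"
            by (intro negligible_valid_path) simp
          then show ?thesis by (intro negligible_closed_null) auto
        qed
        ultimately show ?thesis unfolding Bad_def by auto
      qed
      have AEp: "AE z in lborel. (\<Sum>i<N. mi (cp i) z) \<le> (\<Sum>i<N. mi (cg i) z) + of_nat N * indicator E z"
        using AE_not_in[OF nullB]
      proof (rule AE_mp, intro AE_I2 impI)
        fix z assume z: "z \<notin> Bad"
        show "(\<Sum>i<N. mi (cp i) z) \<le> (\<Sum>i<N. mi (cg i) z) + of_nat N * indicator E z"
          unfolding cp_def cg_def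
          by (rule pointwise[OF N fc fA pc p0 p1 pm[unfolded m_def] E(3)[unfolded m_def] pg fg])
             (use z in \<open>auto simp: Bad_def\<close>)
      qed
      have mcp: "(\<lambda>z. mi (cp i) z) \<in> borel_measurable lborel" if "i \<in> {..<N}" for i
        using mi_measurable[OF pcp] that by simp
      have mcg: "(\<lambda>z. mi (cg i) z) \<in> borel_measurable lborel" if "i \<in> {..<N}" for i
        using mi_measurable[OF pcg] that by simp
      have "(\<Sum>i<N. mass2 (cp i)) = (\<Sum>i<N. (\<integral>\<^sup>+ z. mi (cp i) z \<partial>lborel))"
        unfolding mass2_mi ..
      also have "\<dots> = (\<integral>\<^sup>+ z. (\<Sum>i<N. mi (cp i) z) \<partial>lborel)"
        by (rule nn_integral_sum[symmetric]) (rule mcp)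
      also have "\<dots> \<le> (\<integral>\<^sup>+ z. (\<Sum>i<N. mi (cg i) z) + of_nat N * indicator E z \<partial>lborel)"
        by (rule nn_integral_mono_AE[OF AEp])
      also have "\<dots> = (\<integral>\<^sup>+ z. (\<Sum>i<N. mi (cg i) z) \<partial>lborel) + (\<integral>\<^sup>+ z. of_nat N * indicator E z \<partial>lborel)"
        by (rule nn_integral_add) (use mcg E(1) in auto)
      also have "(\<integral>\<^sup>+ z. (\<Sum>i<N. mi (cg i) z) \<partial>lborel) = (\<Sum>i<N. (\<integral>\<^sup>+ z. mi (cg i) z \<partial>lborel))"
        by (rule nn_integral_sum) (rule mcg)
      also have "\<dots> = (\<Sum>i<N. mass2 (cg i))"
        unfolding mass2_mi ..
      also have "(\<integral>\<^sup>+ z. of_nat N * indicator E z \<partial>lborel) = of_nat N * emeasure lborel E"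
        by (rule nn_integral_cmult_indicator[OF E(1)])
      also have "(\<Sum>i<N. mass2 (cg i)) + of_nat N * emeasure lborel E \<le> (\<Sum>i<N. mass2 (cg i)) + of_nat N * ennreal (4 * \<delta>)"
        by (intro add_left_mono mult_left_mono E(2)) auto
      finally have key: "(\<Sum>i<N. mass2 (cp i)) \<le> (\<Sum>i<N. mass2 (cg i)) + of_nat N * ennreal (4 * \<delta>)" .
      have "median_obj lam f N (ograph p) = ennreal lam * (\<Sum>i<N. mass2 (cp i))"
        by (simp add: median_obj_def cp_def sum_distrib_left)
      also have "\<dots> \<le> ennreal lam * ((\<Sum>i<N. mass2 (cg i)) + of_nat N * ennreal (4 * \<delta>))"
        by (intro mult_left_mono key) auto
      also have "\<dots> = ennreal lam * (\<Sum>i<N. mass2 (cg i)) + ennreal lam * (of_nat N * ennreal (4 * \<delta>))"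
        by (rule distrib_left)
      also have "ennreal lam * (\<Sum>i<N. mass2 (cg i)) = median_obj lam f N \<gamma>"
        by (simp add: median_obj_def cg_def sum_distrib_left)
      also have "ennreal lam * (of_nat N * ennreal (4 * \<delta>)) = ennreal (lam * (real N * (4 * \<delta>)))"
        using lam d by (simp add: ennreal_mult ennreal_of_nat_eq_real_of_nat)
      also have "lam * (real N * (4 * \<delta>)) = e"
        unfolding \<delta>_def using lam N by (simp add: field_simps)
      finally show "?R \<le> median_obj lam f N \<gamma> + ennreal e" using R by simp
    qed
  qed
qed


end
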